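(* Let $R$ be a commutative ring with identity and $n>1$. Every (left or right) zero-divisor in $M_n(R)$ is a two-sided zero-divisor.
   Context: An element $x$ of a ring $S$ is a left (resp. right) zero-divisor if $xy=0$ (resp. $yx=0$) for some nonzero $y\in S$; a two-sided zero-divisor if it is both. *)

theory Defs
  imports "HOL-Analysis.Finite_Cartesian_Product"
begin

definition mat_left_zero_divisor :: "('a::comm_ring_1)^'n^'n \<Rightarrow> bool" where
  "mat_left_zero_divisor A \<longleftrightarrow> (\<exists>B::'a^'n^'n. B \<noteq> 0 \<and> A ** B = 0)"

definition mat_right_zero_divisor :: "('a::comm_ring_1)^'n^'n \<Rightarrow> bool" where
  "mat_right_zero_divisor A \<longleftrightarrow> (\<exists>B::'a^'n^'n. B \<noteq> 0 \<and> B ** A = 0)"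

definition mat_two_sided_zero_divisor :: "('a::comm_ring_1)^'n^'n \<Rightarrow> bool" where
  "mat_two_sided_zero_divisor A \<longleftrightarrow> mat_left_zero_divisor A \<and> mat_right_zero_divisor A"

end

theory Submission imports Defs "Jordan_Normal_Form.Determinant" begin

definition ent :: "('a::comm_ring_1)^'n^'n \<Rightarrow> 'n \<Rightarrow> 'n \<Rightarrow> 'a" where
  "ent A i j = vec_nth (vec_nth A i) j"

definition minor :: "('a::comm_ring_1)^'n^'n \<Rightarrow> 'n list \<Rightarrow> 'n list \<Rightarrow> 'a" where
  "minor A rs cs = det (Matrix.mat (length rs) (length rs) (\<lambda>(a,b). ent A (rs!a) (cs!b)))"

lemma minor_nil: "minor A [] [] = 1"
proof -
  have "Matrix.mat 0 0 (\<lambda>(a,b). ent A ([]!a) ([]!b)) = 1\<^sub>m 0"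
    by (rule eq_matI) auto
  then show ?thesis unfolding minor_def by simp
qed

lemma key_step:
  fixes A :: "('a::comm_ring_1)^'n^'n"
  assumes drs: "distinct rs" and lrs: "length rs = k" and lcs: "length cs = k"
    and j: "j \<notin> set cs"
    and kill: "\<And>rs' cs'. distinct rs' \<Longrightarrow> distinct cs' \<Longrightarrow> length rs' = Suc k \<Longrightarrow> length cs' = Suc k
        \<Longrightarrow> r * minor A rs' cs' = 0"
    and dcs: "distinct cs"
  shows "\<exists>x. x j = r * minor A rs cs \<and> (\<forall>i. (\<Sum>c\<in>UNIV. ent A i c * x c) = 0)"
proof -
  define cs' where "cs' = cs @ [j]"
  define N where "N = Matrix.mat (Suc k) (Suc k) (\<lambda>(a,b). if a < k then ent A (rs!a) (cs'!b) else 0)"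
  define cof where "cof b = cofactor N k b" for b
  define x where "x c = (\<Sum>b<Suc k. if cs'!b = c then r * cof b else 0)" for c
  have N: "N \<in> carrier_mat (Suc k) (Suc k)" unfolding N_def by simp
  have "x j = (\<Sum>b<Suc k. if b = k then r * cof b else 0)"
    unfolding x_def
  proof (rule sum.cong[OF refl])
    fix b assume "b \<in> {..<Suc k}"
    then have "b < Suc k" by simp
    moreover have "b < k \<Longrightarrow> cs'!b \<noteq> j" using j lcs unfolding cs'_def
      by (auto simp: nth_append)
    moreover have "cs'!k = j" unfolding cs'_def by (simp flip: lcs)
    ultimately show "(if cs'!b = j then r * cof b else 0) = (if b = k then r * cof b else 0)"
      by (cases "b = k") auto
  qed
  also have "\<dots> = r * cof k" by simp
  also have "cof k = minor A rs cs"
  proof -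
    have "mat_delete N k k = Matrix.mat k k (\<lambda>(a,b). ent A (rs!a) (cs!b))"
      by (rule eq_matI) (auto simp: mat_delete_def N_def cs'_def nth_append lcs)
    then show ?thesis unfolding cof_def cofactor_def minor_def lrs
      by (simp flip: mult_2)
  qed
  finally have xj: "x j = r * minor A rs cs" .
  have "(\<Sum>c\<in>UNIV. ent A i c * x c) = 0" for i
  proof -
    define M where "M = Matrix.mat (Suc k) (Suc k) (\<lambda>(a,b). ent A ((rs@[i])!a) (cs'!b))"
    have M: "M \<in> carrier_mat (Suc k) (Suc k)" unfolding M_def by simp
    have cofM: "cofactor M k b = cof b" for b
    proof -
      have "mat_delete M k b = mat_delete N k b"
        by (rule eq_matI) (auto simp: mat_delete_def N_def M_def nth_append lrs)
      then show ?thesis unfolding cof_def cofactor_def by simp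
    qed
    have "(\<Sum>c\<in>UNIV. ent A i c * x c) = (\<Sum>c\<in>UNIV. \<Sum>b<Suc k. if cs'!b = c then ent A i c * (r * cof b) else 0)"
      unfolding x_def sum_distrib_left by (intro sum.cong refl) auto
    also have "\<dots> = (\<Sum>b<Suc k. \<Sum>c\<in>UNIV. if cs'!b = c then ent A i c * (r * cof b) else 0)"
      by (rule sum.swap)
    also have "\<dots> = (\<Sum>b<Suc k. ent A i (cs'!b) * (r * cof b))"
      by (simp add: sum.delta)
    also have "\<dots> = r * (\<Sum>b<Suc k. M $$ (k, b) * cofactor M k b)"
      unfolding sum_distrib_left cofM
      by (intro sum.cong refl) (auto simp: M_def lrs nth_append mult_ac)
    also have "\<dots> = r * det M"
      using laplace_expansion_row[OF M, of k] by simp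
    also have "\<dots> = 0"
    proof (cases "i \<in> set rs")
      case True
      then obtain a where a: "a < k" "rs!a = i" using lrs by (auto simp: in_set_conv_nth)
      have "det M = 0"
        apply (rule det_identical_rows[OF M, of a k])
        using a by (auto simp: M_def lrs nth_append intro!: eq_vecI)
      then show ?thesis by simp
    next
      case False
      have "r * minor A (rs@[i]) cs' = 0"
        apply (rule kill) using False drs dcs j lrs lcs by (auto simp: cs'_def)
      moreover have "minor A (rs@[i]) cs' = det M" unfolding minor_def M_def using lrs by simp
      ultimately show ?thesis by simp
    qed
    finally show ?thesis .
  qed
  with xj show ?thesis by blast
qed

lemma Q:
  fixes A :: "('a::comm_ring_1)^'n^'n"
  shows "k \<le> CARD('n) \<Longrightarrow> r \<noteq> 0 \<Longrightarrow>
    (\<And>rs cs. distinct rs \<Longrightarrow> distinct cs \<Longrightarrow> length rs = k \<Longrightarrow> length cs = k \<Longrightarrow> r * minor A rs cs = 0)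
    \<Longrightarrow> \<exists>x. (\<exists>c. x c \<noteq> 0) \<and> (\<forall>i. (\<Sum>c\<in>UNIV. ent A i c * x c) = 0)"
proof (induction k arbitrary: r)
  case 0
  then have "r * minor A [] [] = 0" by simp
  with 0 show ?case by (simp add: minor_nil)
next
  case (Suc k)
  show ?case
  proof (cases "\<forall>rs cs. distinct rs \<longrightarrow> distinct cs \<longrightarrow> length rs = k \<longrightarrow> length cs = k \<longrightarrow> r * minor A rs cs = 0")
    case True
    then show ?thesis using Suc.IH[of r] Suc.prems by auto
  next
    case False
    then obtain rs cs where rc: "distinct rs" "distinct cs" "length rs = k" "length cs = k"
      "r * minor A rs cs \<noteq> 0" by blast
    have "card (set cs) < card (UNIV :: 'n set)" using rc Suc.prems by (simp add: distinct_card)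
    then obtain j where j: "j \<notin> set cs" by (metis UNIV_I psubsetI subsetI card_mono finite psubset_card_mono less_irrefl subset_antisym)
    obtain x where x: "x j = r * minor A rs cs" "\<forall>i. (\<Sum>c\<in>UNIV. ent A i c * x c) = 0"
      using key_step[OF rc(1,3,4) j _ rc(2), of r A] Suc.prems(3) by blast
    then have "\<exists>c. x c \<noteq> 0" using rc(5) by metis
    with x show ?thesis by blast
  qed
qed

lemma nminors:
  fixes A :: "('a::comm_ring_1)^'n^'n"
  assumes x0: "x c0 \<noteq> 0" and x: "\<And>i. (\<Sum>c\<in>UNIV. ent A i c * x c) = 0"
    and rc: "distinct rs" "distinct cs" "length rs = CARD('n)" "length cs = CARD('n)"
  shows "x c0 * minor A rs cs = 0"
proof -
  let ?n = "CARD('n)"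
  define M where "M = Matrix.mat ?n ?n (\<lambda>(a,b). ent A (rs!a) (cs!b))"
  have M: "M \<in> carrier_mat ?n ?n" unfolding M_def by simp
  have setcs: "set cs = UNIV"
    using rc by (metis card_set distinct_card card_subset_eq finite subset_UNIV card_UNIV_unit)
  have reidx: "(\<Sum>b<?n. g (cs!b)) = (\<Sum>c\<in>UNIV. g c)" for g :: "'n \<Rightarrow> 'a"
  proof -
    have "inj_on (nth cs) {..<?n}" using rc by (auto intro: inj_on_nth)
    moreover have "nth cs ` {..<?n} = UNIV" using setcs rc by (auto simp: set_conv_nth)
    ultimately show ?thesis using sum.reindex[of "nth cs" "{..<?n}" g] by simp
  qed
  have My: "(\<Sum>b<?n. M $$ (a,b) * x (cs!b)) = 0" if "a < ?n" for a
    using that reidx[of "\<lambda>c. ent A (rs!a) c * x c"] x[of "rs!a"] by (simp add: M_def)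
  obtain b0 where b0: "b0 < ?n" "cs!b0 = c0" using setcs rc by (metis UNIV_I in_set_conv_nth)
  let ?adj = "adj_mat M"
  have adjM: "?adj * M = det M \<cdot>\<^sub>m 1\<^sub>m ?n" using adj_mat[OF M] by simp
  have adjC: "?adj \<in> carrier_mat ?n ?n" using adj_mat[OF M] by simp
  have "(\<Sum>c<?n. (?adj * M) $$ (b0,c) * x (cs!c)) = det M * x c0"
  proof -
    have "(\<Sum>c<?n. (?adj * M) $$ (b0,c) * x (cs!c)) = (\<Sum>c<?n. if c = b0 then det M * x (cs!c) else 0)"
      by (intro sum.cong refl) (use b0 in \<open>auto simp: adjM\<close>)
    also have "\<dots> = det M * x c0" using b0 by simp
    finally show ?thesis .
  qed
  moreover have "(\<Sum>c<?n. (?adj * M) $$ (b0,c) * x (cs!c)) = (\<Sum>c<?n. \<Sum>a<?n. ?adj $$ (b0,a) * M $$ (a,c) * x (cs!c))"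
    using adjC M b0 by (intro sum.cong refl) (auto simp: times_mat_def scalar_prod_def sum_distrib_right atLeast0LessThan)
  moreover have "\<dots> = (\<Sum>a<?n. ?adj $$ (b0,a) * (\<Sum>c<?n. M $$ (a,c) * x (cs!c)))"
    by (subst sum.swap) (simp add: sum_distrib_left mult.assoc)
  moreover have "\<dots> = 0" using My by simp
  ultimately have "det M * x c0 = 0" by simp
  then show ?thesis unfolding minor_def M_def using rc by (simp add: mult.commute)
qed

definition tr :: "('a::comm_ring_1)^'n^'n \<Rightarrow> 'a^'n^'n" where
  "tr A = vec_lambda (\<lambda>i. vec_lambda (\<lambda>j. ent A j i))"

lemma ent_tr[simp]: "ent (tr A) i j = ent A j i"
  by (simp add: tr_def ent_def)

lemma minor_tr: "length rs = length cs \<Longrightarrow> minor (tr A) rs cs = minor A cs rs"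
proof -
  assume l: "length rs = length cs"
  let ?X = "Matrix.mat (length cs) (length cs) (\<lambda>(a,b). ent A (cs!a) (rs!b))"
  have e: "Matrix.mat (length rs) (length rs) (\<lambda>(a,b). ent (tr A) (rs!a) (cs!b)) = transpose_mat ?X"
    using l by (intro eq_matI) auto
  have "minor (tr A) rs cs = det (transpose_mat ?X)" unfolding minor_def e ..
  also have "\<dots> = det ?X" by (rule det_transpose) (rule mat_carrier)
  also have "\<dots> = minor A cs rs" unfolding minor_def ..
  finally show ?thesis .
qed

lemma swap_zd:
  fixes M :: "('a::comm_ring_1)^'n^'n"
  assumes "\<exists>x. (\<exists>c. x c \<noteq> 0) \<and> (\<forall>i. (\<Sum>c\<in>UNIV. ent M i c * x c) = 0)"
  shows "\<exists>y. (\<exists>c. y c \<noteq> 0) \<and> (\<forall>i. (\<Sum>c\<in>UNIV. ent M c i * y c) = 0)"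
proof -
  obtain x c0 where x0: "x c0 \<noteq> 0" and x: "\<And>i. (\<Sum>c\<in>UNIV. ent M i c * x c) = 0"
    using assms by blast
  have kill: "x c0 * minor (tr M) rs cs = 0" if "distinct rs" "distinct cs" "length rs = CARD('n)" "length cs = CARD('n)" for rs cs
    using nminors[OF x0 x, of cs rs] that by (simp add: minor_tr)
  obtain y c1 where y: "y c1 \<noteq> 0" "\<forall>i. (\<Sum>c\<in>UNIV. ent (tr M) i c * y c) = 0"
    using Q[of "CARD('n)" "x c0" "tr M"] x0 kill by blast
  have "\<forall>i. (\<Sum>c\<in>UNIV. ent M c i * y c) = 0" using y(2) by simp
  with y(1) show ?thesis by blast
qed

theorem corollary2:
  fixes A :: "('a::comm_ring_1)^'n^'n"
  assumes "CARD('n) > 1"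
    and "mat_left_zero_divisor A \<or> mat_right_zero_divisor A"
  shows "mat_two_sided_zero_divisor A"
proof -
  have mm: "ent (P ** Q) i j = (\<Sum>k\<in>UNIV. ent P i k * ent Q k j)" for P Q :: "'a^'n^'n" and i j
    by (simp add: ent_def matrix_matrix_mult_def)
  have z: "P = 0 \<longleftrightarrow> (\<forall>i j. ent P i j = 0)" for P :: "'a^'n^'n"
    unfolding ent_def by (simp add: Finite_Cartesian_Product.vec_eq_iff)
  have nz: "P \<noteq> 0 \<longleftrightarrow> (\<exists>i j. ent P i j \<noteq> 0)" for P :: "'a^'n^'n"
    using z by blast
  have L2R: "mat_right_zero_divisor A" if LZ: "mat_left_zero_divisor A"
  proof -
    obtain B :: "'a^'n^'n" where B: "B \<noteq> 0" "A ** B = 0" using LZ unfolding mat_left_zero_divisor_def by blast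
    from B(1) obtain c l where cl: "ent B c l \<noteq> 0" unfolding nz by blast
    have "\<forall>i. (\<Sum>c\<in>UNIV. ent A i c * ent B c l) = 0"
    proof
      fix i have "ent (A ** B) i l = 0" using B(2) by (simp add: ent_def)
      then show "(\<Sum>c\<in>UNIV. ent A i c * ent B c l) = 0" by (simp only: mm)
    qed
    then have "\<exists>x. (\<exists>c. x c \<noteq> 0) \<and> (\<forall>i. (\<Sum>c\<in>UNIV. ent A i c * x c) = 0)"
      using cl by (intro exI[of _ "\<lambda>c. ent B c l"] conjI exI[of _ c]) simp_all
    then obtain y c1 where y: "y c1 \<noteq> 0" "\<forall>i. (\<Sum>c\<in>UNIV. ent A c i * y c) = 0"
      using swap_zd[of A] by blast
    define C where "C = (vec_lambda (\<lambda>l. vec_lambda (\<lambda>c. y c)) :: 'a^'n^'n)"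
    have "ent C l c = y c" for l c by (simp add: C_def ent_def)
    note Ce = this
    have "ent C c1 c1 \<noteq> 0" using y(1) Ce by simp
    then have "C \<noteq> 0" using nz by blast
    moreover have "ent (C ** A) i j = 0" for i j using y(2) by (simp add: mm Ce mult.commute)
    then have "C ** A = 0" using z by blast
    ultimately show ?thesis unfolding mat_right_zero_divisor_def by blast
  qed
  have R2L: "mat_left_zero_divisor A" if RZ: "mat_right_zero_divisor A"
  proof -
    obtain B :: "'a^'n^'n" where B: "B \<noteq> 0" "B ** A = 0" using RZ unfolding mat_right_zero_divisor_def by blast
    from B(1) obtain l c where cl: "ent B l c \<noteq> 0" unfolding nz by blast
    have "(\<Sum>c\<in>UNIV. ent B l c * ent A c i) = 0" for i
    proof -
      have "ent (B ** A) l i = 0" using B(2) by (simp add: ent_def)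
      then show ?thesis by (simp only: mm)
    qed
    then have "\<forall>i. (\<Sum>c\<in>UNIV. ent (tr A) i c * ent B l c) = 0" by (simp add: mult.commute)
    then have "\<exists>x. (\<exists>c. x c \<noteq> 0) \<and> (\<forall>i. (\<Sum>c\<in>UNIV. ent (tr A) i c * x c) = 0)"
      using cl by (intro exI[of _ "\<lambda>c. ent B l c"] conjI exI[of _ c]) simp_all
    then obtain y c1 where y: "y c1 \<noteq> 0" "\<forall>i. (\<Sum>c\<in>UNIV. ent (tr A) c i * y c) = 0"
      using swap_zd[of "tr A"] by blast
    define C where "C = (vec_lambda (\<lambda>c. vec_lambda (\<lambda>l. y c)) :: 'a^'n^'n)"
    have "ent C c l = y c" for l c by (simp add: C_def ent_def)
    note Ce = this
    have "ent C c1 c1 \<noteq> 0" using y(1) Ce by simp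
    then have "C \<noteq> 0" using nz by blast
    moreover have "ent (A ** C) i j = 0" for i j using y(2) by (simp add: mm Ce mult.commute)
    then have "A ** C = 0" using z by blast
    ultimately show ?thesis unfolding mat_left_zero_divisor_def by blast
  qed
  show ?thesis using assms(2) L2R R2L unfolding mat_two_sided_zero_divisor_def by blast
qed

end
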